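(* Let $G$ be a finite graph with positive weights $w$ on its edges. For $i=1,\dots,k$ let $H_i$ be a subgraph of $G$ with positive weights $w_i$ on its edges, such that (i) there is a constant $m$ with $|\{i: x\in V(H_i)\}|=m$ for every $x\in V(G)$; and (ii) for every $e\in E(G)$, $w(e)\ge \frac1m\sum_{i:\,e\in E(H_i)} w_i(e)$. Then for all $t>0$, $$\frac{1}{|G|}\sum_{x\in V(G)}p_t(x;G)\le \frac{1}{\sum_{j=1}^k|H_j|}\sum_{i=1}^k\sum_{x\in V(H_i)}p_t(x;H_i).$$
   Context: For a graph $K$ with positive edge weights, its Laplacian $\Delta_K$ has off-diagonal entries $\Delta_K(x,y)=-w(e)$ when $e$ is the edge joining $x$ and $y$ with weight $w(e)$, all other off-diagonal entries $0$, and row sums $0$. $p_t(x;K)$, the probability that continuous-time random walk on the weighted graph $K$ started at $x$ is at $x$ at time $t$, is the $(x,x)$-entry of $e^{-t\Delta_K}$ (with $\Delta_{H_i}$ formed using the weights $w_i$). $|K|$ is the number of vertices. *)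

theory Defs
  imports Complex_Main
begin

text \<open>Matrices indexed by V are functions
'a \<Rightarrow> 'a \<Rightarrow> real; only entries in V \<times> V are relevant.\<close>

definition wgraph :: "'a set \<Rightarrow> 'a set set \<Rightarrow> ('a set \<Rightarrow> real) \<Rightarrow> bool" where
  "wgraph V E w \<longleftrightarrow> finite V \<and>
     (\<forall>e\<in>E. \<exists>x y. x \<in> V \<and> y \<in> V \<and> x \<noteq> y \<and> e = {x, y}) \<and>
     (\<forall>e\<in>E. w e > 0)"

text \<open>Laplacian: off-diagonal entry -w(e) if e={x,y} is an edge, else 0;
diagonal entry makes the row sum 0.\<close>
definition laplacian :: "'a set \<Rightarrow> 'a set set \<Rightarrow> ('a set \<Rightarrow> real) \<Rightarrow> 'a \<Rightarrow> 'a \<Rightarrow> real" where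
  "laplacian V E w x y =
     (if x = y then (\<Sum>z\<in>V - {x}. if {x, z} \<in> E then w {x, z} else 0)
      else if {x, y} \<in> E then - w {x, y} else 0)"

definition mat_mult :: "'a set \<Rightarrow> ('a \<Rightarrow> 'a \<Rightarrow> real) \<Rightarrow> ('a \<Rightarrow> 'a \<Rightarrow> real) \<Rightarrow> 'a \<Rightarrow> 'a \<Rightarrow> real" where
  "mat_mult V A B x y = (\<Sum>z\<in>V. A x z * B z y)"

fun mat_pow :: "'a set \<Rightarrow> ('a \<Rightarrow> 'a \<Rightarrow> real) \<Rightarrow> nat \<Rightarrow> 'a \<Rightarrow> 'a \<Rightarrow> real" where
  "mat_pow V A 0 = (\<lambda>x y. if x = y then 1 else 0)"
| "mat_pow V A (Suc n) = mat_mult V A (mat_pow V A n)"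

definition mat_exp :: "'a set \<Rightarrow> ('a \<Rightarrow> 'a \<Rightarrow> real) \<Rightarrow> 'a \<Rightarrow> 'a \<Rightarrow> real" where
  "mat_exp V A x y = (\<Sum>n. mat_pow V A n x y / fact n)"

definition heat_return :: "'a set \<Rightarrow> 'a set set \<Rightarrow> ('a set \<Rightarrow> real) \<Rightarrow> real \<Rightarrow> 'a \<Rightarrow> real" where
  "heat_return V E w t x = mat_exp V (\<lambda>a b. - t * laplacian V E w a b) x x"

end

theory Submission
  imports Defs "HOL-Analysis.Analysis"
begin

definition ip :: "'a set \<Rightarrow> ('a \<Rightarrow> real) \<Rightarrow> ('a \<Rightarrow> real) \<Rightarrow> real" where
  "ip S f g = (\<Sum>x\<in>S. f x * g x)"

definition orthofam :: "'a set \<Rightarrow> (nat \<Rightarrow> 'a \<Rightarrow> real) \<Rightarrow> nat \<Rightarrow> bool" where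
  "orthofam S v r \<longleftrightarrow> (\<forall>j<r. \<forall>k<r. ip S (v j) (v k) = (if j = k then 1 else 0))"

definition eigfam :: "'a set \<Rightarrow> ('a \<Rightarrow> 'a \<Rightarrow> real) \<Rightarrow> (nat \<Rightarrow> 'a \<Rightarrow> real) \<Rightarrow> (nat \<Rightarrow> real) \<Rightarrow> nat \<Rightarrow> bool" where
  "eigfam S A v lam r \<longleftrightarrow> orthofam S v r \<and> (\<forall>j<r. \<forall>x\<in>S. (\<Sum>y\<in>S. A x y * v j y) = lam j * v j x)"

definition symm :: "'a set \<Rightarrow> ('a \<Rightarrow> 'a \<Rightarrow> real) \<Rightarrow> bool" where
  "symm S A \<longleftrightarrow> (\<forall>x\<in>S. \<forall>y\<in>S. A x y = A y x)"

lemma ip_comm: "ip S f g = ip S g f"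
  unfolding ip_def by (simp add: mult.commute)

lemma ip_lin: "ip S (\<lambda>x. f x - (\<Sum>j\<in>J. c j * v j x)) h = ip S f h - (\<Sum>j\<in>J. c j * ip S (v j) h)"
  unfolding ip_def
  by (simp add: left_diff_distrib sum_subtractf sum_distrib_left sum_distrib_right sum.swap[of _ J] mult.assoc)

lemma ip_resid_orth:
  assumes "orthofam S v r" "j < r"
  shows "ip S (\<lambda>x. f x - (\<Sum>k<r. ip S f (v k) * v k x)) (v j) = 0"
proof -
  have "(\<Sum>k<r. ip S f (v k) * ip S (v k) (v j)) = (\<Sum>k<r. if k = j then ip S f (v k) else 0)"
    using assms unfolding orthofam_def by (intro sum.cong) auto
  also have "\<dots> = ip S f (v j)" using assms(2) by simp
  finally show ?thesis by (simp add: ip_lin)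
qed

lemma ip_self_nonneg: "ip S f f \<ge> 0"
  unfolding ip_def by (intro sum_nonneg) auto

lemma bessel:
  assumes "orthofam S v r"
  shows "(\<Sum>j<r. (ip S f (v j))^2) \<le> ip S f f"
proof -
  define g where "g = (\<lambda>x. f x - (\<Sum>k<r. ip S f (v k) * v k x))"
  have o: "ip S g (v j) = 0" if "j < r" for j
    using ip_resid_orth[OF assms that] unfolding g_def .
  have "ip S g g = ip S f g - (\<Sum>j<r. ip S f (v j) * ip S (v j) g)"
    unfolding g_def by (rule ip_lin)
  also have "(\<Sum>j<r. ip S f (v j) * ip S (v j) g) = 0"
    using o by (simp add: ip_comm[of S _ g])
  also have "ip S f g = ip S f f - (\<Sum>j<r. (ip S f (v j))^2)"
    by (subst ip_comm, unfold g_def, subst ip_lin) (simp add: power2_eq_square ip_comm)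
  finally show ?thesis using ip_self_nonneg[of S g] by simp
qed

definition delta :: "'a \<Rightarrow> 'a \<Rightarrow> real" where "delta y = (\<lambda>x. if x = y then 1 else 0)"

lemma ip_delta: "finite S \<Longrightarrow> y \<in> S \<Longrightarrow> ip S (delta y) h = h y"
proof -
  assume "finite S" "y \<in> S"
  have "ip S (delta y) h = (\<Sum>x\<in>S. if x = y then h x else 0)"
    unfolding ip_def delta_def by (rule sum.cong) auto
  then show ?thesis using \<open>finite S\<close> \<open>y \<in> S\<close> by simp
qed

lemma ortho_bound:
  assumes "finite S" "orthofam S v r"
  shows "r \<le> card S"
proof -
  have "real r = (\<Sum>j<r. ip S (v j) (v j))"
    using assms(2) unfolding orthofam_def by simp
  also have "\<dots> = (\<Sum>x\<in>S. \<Sum>j<r. (v j x)^2)"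
    unfolding ip_def by (simp add: sum.swap[of _ S] power2_eq_square)
  also have "\<dots> \<le> (\<Sum>x\<in>S. 1)"
  proof (rule sum_mono)
    fix x assume x: "x \<in> S"
    have "(\<Sum>j<r. (v j x)^2) = (\<Sum>j<r. (ip S (delta x) (v j))^2)"
      using ip_delta[OF assms(1) x] by simp
    also have "\<dots> \<le> ip S (delta x) (delta x)" by (rule bessel[OF assms(2)])
    also have "\<dots> = 1" using ip_delta[OF assms(1) x] by (simp add: delta_def)
    finally show "(\<Sum>j<r. (v j x)^2) \<le> 1" .
  qed
  finally show ?thesis by simp
qed



lemma cont_coord: "continuous_on UNIV (\<lambda>f::'a\<Rightarrow>real. f x)"
  by simp

lemma cont_coord': "continuous_on K (\<lambda>f::'a\<Rightarrow>real. f x)"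
  by (rule continuous_on_subset[OF cont_coord subset_UNIV])

lemma compact_K:
  fixes v :: "nat \<Rightarrow> 'a \<Rightarrow> real"
  assumes "finite S"
  shows "compact {f. (\<forall>x. x \<notin> S \<longrightarrow> f x = 0) \<and> ip S f f = 1 \<and> (\<forall>j<r. ip S f (v j) = 0)}"
    (is "compact ?K")
proof -
  define B where "B = PiE UNIV (\<lambda>x. if x\<in>S then {-1..1} else {0::real})"
  have "compactin (product_topology (\<lambda>i. euclidean) UNIV) B"
    unfolding B_def by (subst compactin_PiE) auto
  hence cB: "compact B" by (simp add: euclidean_product_topology)
  define C where "C = {f::'a\<Rightarrow>real. ip S f f = 1} \<inter> (\<Inter>j\<in>{..<r}. {f. ip S f (v j) = 0})"
  have c1: "continuous_on UNIV (\<lambda>f::'a\<Rightarrow>real. ip S f f)"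
    unfolding ip_def by (intro continuous_intros cont_coord)
  have c2: "continuous_on UNIV (\<lambda>f::'a\<Rightarrow>real. ip S f (v j))" for j
    unfolding ip_def by (intro continuous_intros cont_coord)
  have cC: "closed C" unfolding C_def
    by (intro closed_Int closed_INT ballI closed_Collect_eq c1 c2 continuous_intros)
  have "?K = B \<inter> C"
  proof safe
    fix f assume f: "\<forall>x. x \<notin> S \<longrightarrow> f x = 0" "ip S f f = 1" "\<forall>j<r. ip S f (v j) = 0"
    show "f \<in> C" using f unfolding C_def by auto
    have "\<bar>f x\<bar> \<le> 1" if "x \<in> S" for x
    proof -
      have "(f x)^2 \<le> (\<Sum>y\<in>S. (f y)^2)"
        using assms that by (intro member_le_sum) auto
      also have "\<dots> = 1" using f(2) unfolding ip_def by (simp add: power2_eq_square)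
      finally show ?thesis by (simp add: abs_square_le_1)
    qed
    then show "f \<in> B" unfolding B_def using f(1) by (auto simp: PiE_def Pi_def abs_le_iff)
  next
    fix f x assume hB: "f \<in> B" and "f \<in> C" and x: "x \<notin> S"
    have "f x \<in> (if x \<in> S then {-1..1} else {0})"
      by (rule PiE_mem[OF hB[unfolded B_def]]) simp
    then show "f x = 0" using x by simp
  next
    fix f assume "f \<in> B" "f \<in> C" then show "ip S f f = 1" unfolding C_def by auto
  next
    fix f j assume "f \<in> B" "f \<in> C" "j < r" then show "ip S f (v j) = 0" unfolding C_def by auto
  qed
  then show ?thesis using cB cC by (simp add: compact_Int_closed)
qed

definition Qf :: "'a set \<Rightarrow> ('a \<Rightarrow> 'a \<Rightarrow> real) \<Rightarrow> ('a \<Rightarrow> real) \<Rightarrow> real" where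
  "Qf S A f = (\<Sum>x\<in>S. \<Sum>y\<in>S. A x y * f x * f y)"

definition Bl :: "'a set \<Rightarrow> ('a \<Rightarrow> 'a \<Rightarrow> real) \<Rightarrow> ('a \<Rightarrow> real) \<Rightarrow> ('a \<Rightarrow> real) \<Rightarrow> real" where
  "Bl S A f h = (\<Sum>x\<in>S. \<Sum>y\<in>S. A x y * f x * h y)"

lemma Qf_cong: "(\<And>x. x \<in> S \<Longrightarrow> f x = g x) \<Longrightarrow> Qf S A f = Qf S A g"
  unfolding Qf_def by (intro sum.cong) auto

lemma ip_cong: "(\<And>x. x \<in> S \<Longrightarrow> f x = f' x) \<Longrightarrow> (\<And>x. x \<in> S \<Longrightarrow> g x = g' x) \<Longrightarrow> ip S f g = ip S f' g'"
  unfolding ip_def by (intro sum.cong) auto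

lemma Qf_scale: "Qf S A (\<lambda>x. c * f x) = c^2 * Qf S A f"
  unfolding Qf_def by (simp add: sum_distrib_left power2_eq_square algebra_simps)

lemma ip_scale: "ip S (\<lambda>x. c * f x) g = c * ip S f g"
  unfolding ip_def by (simp add: sum_distrib_left algebra_simps)

lemma ip_div: "ip S (\<lambda>x. f x / c) g = ip S f g / c"
  unfolding ip_def by (simp add: sum_divide_distrib)

lemma ip_scale2: "ip S (\<lambda>x. c * f x) (\<lambda>x. c * f x) = c^2 * ip S f f"
  unfolding ip_def by (simp add: sum_distrib_left power2_eq_square algebra_simps)

lemma Bl_sym: "symm S A \<Longrightarrow> Bl S A f h = Bl S A h f"
  unfolding Bl_def symm_def
  by (subst sum.swap) (intro sum.cong refl, simp add: mult_ac)

lemma Qf_add: "symm S A \<Longrightarrow> Qf S A (\<lambda>x. f x + s * h x) = Qf S A f + 2 * s * Bl S A f h + s^2 * Qf S A h"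
proof -
  assume sy: "symm S A"
  have "Qf S A (\<lambda>x. f x + s * h x) = Qf S A f + s * Bl S A f h + s * Bl S A h f + s^2 * Qf S A h"
    unfolding Qf_def Bl_def by (simp add: algebra_simps sum.distrib sum_distrib_left power2_eq_square)
  then show ?thesis using Bl_sym[OF sy, of f h] by simp
qed

lemma ip_add: "ip S (\<lambda>x. f x + s * h x) (\<lambda>x. f x + s * h x) = ip S f f + 2 * s * ip S f h + s^2 * ip S h h"
  unfolding ip_def by (simp add: algebra_simps sum.distrib sum_distrib_left power2_eq_square)

lemma ip_zero_iff: "finite S \<Longrightarrow> ip S f f = 0 \<longleftrightarrow> (\<forall>x\<in>S. f x = 0)"
  unfolding ip_def by (subst sum_nonneg_eq_0_iff) auto

lemma quad_zero:
  fixes b c :: real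
  assumes "c \<ge> 0" "\<And>s. 0 \<le> 2 * s * b + s^2 * c"
  shows "b = 0"
proof (rule ccontr)
  assume "b \<noteq> 0"
  define s where "s = - b / (c + 1)"
  have cp: "c + 1 > 0" using assms(1) by simp
  have sc: "s * (c+1) = -b" unfolding s_def using cp by simp
  have "(c+1)^2 * (2 * s * b + s^2 * c) = 2*b*(c+1)*(s*(c+1)) + (s*(c+1))^2*c"
    by (simp add: power2_eq_square algebra_simps)
  also have "\<dots> = - (b^2 * (c + 2))" unfolding sc by (simp add: power2_eq_square algebra_simps)
  finally have e: "(c+1)^2 * (2 * s * b + s^2 * c) = - (b^2 * (c + 2))" .
  have "b^2 * (c + 2) > 0" using \<open>b \<noteq> 0\<close> assms(1) by simp
  moreover have "0 \<le> (c+1)^2 * (2 * s * b + s^2 * c)" using assms(2)[of s] by simp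
  ultimately show False using e by linarith
qed

lemma extend:
  fixes A :: "'a \<Rightarrow> 'a \<Rightarrow> real"
  assumes fin: "finite S" and sy: "symm S A" and ef: "eigfam S A v lam r"
    and gW: "\<forall>j<r. ip S g (v j) = 0" and x0: "x0 \<in> S" "g x0 \<noteq> 0"
  shows "\<exists>u \<mu>. ip S u u = 1 \<and> (\<forall>j<r. ip S u (v j) = 0) \<and> (\<forall>x\<in>S. (\<Sum>y\<in>S. A x y * u y) = \<mu> * u x)"
proof -
  define K where "K = {f. (\<forall>x. x \<notin> S \<longrightarrow> f x = 0) \<and> ip S f f = 1 \<and> (\<forall>j<r. ip S f (v j) = 0)}"
  have cK: "compact K" unfolding K_def by (rule compact_K[OF fin])
  have gpos: "ip S g g > 0"
    using ip_zero_iff[OF fin, of g] ip_self_nonneg[of S g] x0 by force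
  define f0 where "f0 = (\<lambda>x. if x \<in> S then (1 / sqrt (ip S g g)) * g x else 0)"
  have "ip S f0 f0 = ip S (\<lambda>x. (1 / sqrt (ip S g g)) * g x) (\<lambda>x. (1 / sqrt (ip S g g)) * g x)"
    unfolding f0_def by (rule ip_cong) auto
  also have "\<dots> = (1 / sqrt (ip S g g))^2 * ip S g g" by (rule ip_scale2)
  also have "\<dots> = 1" using gpos by (simp add: power_divide)
  finally have f01: "ip S f0 f0 = 1" .
  have "ip S f0 (v j) = 0" if "j < r" for j
  proof -
    have "ip S f0 (v j) = ip S (\<lambda>x. (1 / sqrt (ip S g g)) * g x) (v j)"
      unfolding f0_def by (rule ip_cong) auto
    then show ?thesis using gW that by (simp add: ip_div)
  qed
  then have "f0 \<in> K" unfolding K_def using f01 by (auto simp: f0_def)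
  then have neK: "K \<noteq> {}" by auto
  have cQ: "continuous_on K (Qf S A)"
    unfolding Qf_def by (intro continuous_intros cont_coord')
  obtain u where uK: "u \<in> K" and umax: "\<And>f. f \<in> K \<Longrightarrow> Qf S A f \<le> Qf S A u"
    using continuous_attains_sup[OF cK neK cQ] by blast
  define \<mu> where "\<mu> = Qf S A u"
  have u1: "ip S u u = 1" and uW: "\<forall>j<r. ip S u (v j) = 0" using uK unfolding K_def by auto
  have claim1: "Qf S A f \<le> \<mu> * ip S f f" if fW: "\<forall>j<r. ip S f (v j) = 0" for f
  proof (cases "ip S f f = 0")
    case True
    then have "\<forall>x\<in>S. f x = 0" using ip_zero_iff[OF fin] by blast
    then have "Qf S A f = 0" unfolding Qf_def by simp
    then show ?thesis using True by simp
  next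
    case False
    then have fp: "ip S f f > 0" using ip_self_nonneg[of S f] by linarith
    define c where "c = 1 / sqrt (ip S f f)"
    define f' where "f' = (\<lambda>x. if x \<in> S then c * f x else 0)"
    have "ip S f' f' = ip S (\<lambda>x. c * f x) (\<lambda>x. c * f x)"
      unfolding f'_def by (rule ip_cong) auto
    also have "\<dots> = c^2 * ip S f f" by (rule ip_scale2)
    also have "\<dots> = 1" using fp unfolding c_def by (simp add: power_divide)
    finally have "ip S f' f' = 1" .
    moreover have "ip S f' (v j) = 0" if "j < r" for j
    proof -
      have "ip S f' (v j) = ip S (\<lambda>x. c * f x) (v j)"
        unfolding f'_def by (rule ip_cong) auto
      then show ?thesis using fW that by (simp add: ip_scale)
    qed
    ultimately have "f' \<in> K" unfolding K_def by (auto simp: f'_def)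
    then have "Qf S A f' \<le> \<mu>" using umax unfolding \<mu>_def by blast
    moreover have "Qf S A f' = c^2 * Qf S A f"
      unfolding f'_def by (subst Qf_cong[of S _ "\<lambda>x. c * f x"]) (auto simp: Qf_scale)
    moreover have "c^2 = 1 / ip S f f" using fp unfolding c_def by (simp add: power_divide)
    ultimately show ?thesis using fp by (simp add: field_simps)
  qed
  have claim2: "Bl S A u h = \<mu> * ip S u h" if hW: "\<forall>j<r. ip S h (v j) = 0" for h
  proof -
    have "0 \<le> 2 * s * (\<mu> * ip S u h - Bl S A u h) + s^2 * (\<mu> * ip S h h - Qf S A h)" for s
    proof -
      have "\<forall>j<r. ip S (\<lambda>x. u x + s * h x) (v j) = 0"
        using uW hW by (simp add: ip_def sum.distrib algebra_simps sum_distrib_left[symmetric])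
      then have "Qf S A (\<lambda>x. u x + s * h x) \<le> \<mu> * ip S (\<lambda>x. u x + s * h x) (\<lambda>x. u x + s * h x)"
        by (rule claim1)
      then show ?thesis unfolding Qf_add[OF sy] ip_add u1 \<mu>_def[symmetric]
        by (simp add: algebra_simps)
    qed
    then have "\<mu> * ip S u h - Bl S A u h = 0"
      using claim1[OF hW] by (intro quad_zero[of "\<mu> * ip S h h - Qf S A h"]) auto
    then show ?thesis by simp
  qed
  define h where "h = (\<lambda>x. (\<Sum>y\<in>S. A x y * u y) - \<mu> * u x)"
  have hW: "\<forall>j<r. ip S h (v j) = 0"
  proof (intro allI impI)
    fix j assume j: "j < r"
    have ev: "\<forall>x\<in>S. (\<Sum>y\<in>S. A x y * v j y) = lam j * v j x" using ef j unfolding eigfam_def by auto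
    have "ip S (\<lambda>x. \<Sum>y\<in>S. A x y * u y) (v j) = (\<Sum>y\<in>S. u y * (\<Sum>x\<in>S. A y x * v j x))"
      unfolding ip_def using sy unfolding symm_def
      by (simp add: sum_distrib_left sum_distrib_right mult_ac) (subst sum.swap, intro sum.cong refl, simp)
    also have "\<dots> = lam j * ip S u (v j)" using ev unfolding ip_def
      by (simp add: sum_distrib_left mult_ac)
    finally have "ip S (\<lambda>x. \<Sum>y\<in>S. A x y * u y) (v j) = 0" using uW j by simp
    then show "ip S h (v j) = 0" using uW j unfolding h_def ip_def
      by (simp add: left_diff_distrib sum_subtractf sum_distrib_left[symmetric] mult.assoc)
  qed
  have "Bl S A u h = ip S (\<lambda>x. \<Sum>y\<in>S. A x y * u y) h"
    unfolding Bl_def ip_def using sy unfolding symm_def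
    by (simp add: sum_distrib_left sum_distrib_right mult_ac) (subst sum.swap, intro sum.cong refl, simp)
  then have "ip S h h = Bl S A u h - \<mu> * ip S u h"
    unfolding h_def ip_def by (simp add: left_diff_distrib sum_subtractf sum_distrib_left mult_ac)
  then have "ip S h h = 0" using claim2[OF hW] by simp
  then have "\<forall>x\<in>S. h x = 0" using ip_zero_iff[OF fin] by blast
  then have "\<forall>x\<in>S. (\<Sum>y\<in>S. A x y * u y) = \<mu> * u x" unfolding h_def by simp
  then show ?thesis using u1 uW by blast
qed


lemma spectral:
  assumes fin: "finite S" and sy: "symm S A"
  shows "\<exists>v lam r. eigfam S A v lam r \<and> (\<forall>x\<in>S. \<forall>y\<in>S. (\<Sum>j<r. v j x * v j y) = (if x = y then 1 else 0))"
proof -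
  define R where "R = {r. \<exists>v lam. eigfam S A v lam r}"
  have Rsub: "R \<subseteq> {..card S}" unfolding R_def eigfam_def using ortho_bound[OF fin] by auto
  have finR: "finite R" using Rsub finite_subset by blast
  have "0 \<in> R" unfolding R_def eigfam_def orthofam_def by auto
  then have "R \<noteq> {}" by auto
  define r0 where "r0 = Max R"
  have "r0 \<in> R" unfolding r0_def using finR \<open>R \<noteq> {}\<close> by (rule Max_in)
  then obtain v lam where ef: "eigfam S A v lam r0" unfolding R_def by auto
  have compl: "\<forall>x\<in>S. delta y x - (\<Sum>k<r0. ip S (delta y) (v k) * v k x) = 0" if y: "y \<in> S" for y
  proof (rule ccontr)
    define g where "g = (\<lambda>x. delta y x - (\<Sum>k<r0. ip S (delta y) (v k) * v k x))"
    assume "\<not> (\<forall>x\<in>S. delta y x - (\<Sum>k<r0. ip S (delta y) (v k) * v k x) = 0)"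
    then obtain x0 where x0: "x0 \<in> S" "g x0 \<noteq> 0" unfolding g_def by auto
    have of: "orthofam S v r0" using ef unfolding eigfam_def by auto
    have gW: "\<forall>j<r0. ip S g (v j) = 0" unfolding g_def using ip_resid_orth[OF of] by blast
    have ex: "\<exists>u \<mu>. ip S u u = 1 \<and> (\<forall>j<r0. ip S u (v j) = 0) \<and> (\<forall>x\<in>S. (\<Sum>y\<in>S. A x y * u y) = \<mu> * u x)"
      by (rule extend[OF fin sy ef gW x0(1) x0(2)])
    then obtain u \<mu> where uu: "ip S u u = 1 \<and> (\<forall>j<r0. ip S u (v j) = 0) \<and> (\<forall>x\<in>S. (\<Sum>y\<in>S. A x y * u y) = \<mu> * u x)"
      by blast
    note u = conjunct1[OF uu] conjunct1[OF conjunct2[OF uu]] conjunct2[OF conjunct2[OF uu]]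
    have "eigfam S A (v(r0 := u)) (lam(r0 := \<mu>)) (Suc r0)"
      unfolding eigfam_def orthofam_def
    proof (intro conjI allI impI ballI)
      fix j k assume jk: "j < Suc r0" "k < Suc r0"
      show "ip S ((v(r0 := u)) j) ((v(r0 := u)) k) = (if j = k then 1 else 0)"
      proof (cases "j = r0")
        case True
        show ?thesis
        proof (cases "k = r0")
          case True
          then show ?thesis using \<open>j = r0\<close> u(1) by simp
        next
          case False
          then have "k < r0" using jk by simp
          then show ?thesis using \<open>j = r0\<close> False u(2) by simp
        qed
      next
        case False
        then have jr: "j < r0" using jk by simp
        show ?thesis
        proof (cases "k = r0")
          case True
          have "ip S (v j) u = ip S u (v j)" by (rule ip_comm)
          then show ?thesis using True False jr u(2) by simp
        next
          case False
          then have "k < r0" using jk by simp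
          then show ?thesis using \<open>j \<noteq> r0\<close> False jr of unfolding orthofam_def by simp
        qed
      qed
    next
      fix j x assume jx: "j < Suc r0" "x \<in> S"
      show "(\<Sum>y\<in>S. A x y * (v(r0 := u)) j y) = (lam(r0 := \<mu>)) j * (v(r0 := u)) j x"
      proof (cases "j = r0")
        case True
        then show ?thesis using u(3) jx by simp
      next
        case False
        then have "j < r0" using jx by simp
        then show ?thesis using False ef jx unfolding eigfam_def by simp
      qed
    qed
    then have "Suc r0 \<in> R" unfolding R_def by blast
    then have "Suc r0 \<le> r0" unfolding r0_def by (rule Max_ge[OF finR])
    then show False by simp
  qed
  have "\<forall>x\<in>S. \<forall>y\<in>S. (\<Sum>j<r0. v j x * v j y) = (if x = y then 1 else 0)"
  proof (intro ballI)
    fix x y assume x: "x \<in> S" and y: "y \<in> S"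
    have "delta y x = (\<Sum>k<r0. ip S (delta y) (v k) * v k x)" using compl[OF y] x by auto
    also have "\<dots> = (\<Sum>k<r0. v k x * v k y)" using ip_delta[OF fin y] by (simp add: mult.commute)
    finally show "(\<Sum>j<r0. v j x * v j y) = (if x = y then 1 else 0)" by (simp add: delta_def)
  qed
  then show ?thesis using ef by blast
qed


definition specdec where
  "specdec S A v lam r \<longleftrightarrow> eigfam S A v lam r \<and> (\<forall>x\<in>S. \<forall>y\<in>S. (\<Sum>j<r. v j x * v j y) = (if x = y then 1 else 0))"

lemma spectral': "finite S \<Longrightarrow> symm S A \<Longrightarrow> \<exists>v lam r. specdec S A v lam r"
  unfolding specdec_def using spectral by blast

lemma pow_expand:
  assumes fin: "finite S" and sd: "specdec S A v lam r" and x: "x \<in> S" and y: "y \<in> S"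
  shows "mat_pow S A n x y = (\<Sum>j<r. lam j ^ n * v j x * v j y)"
  using x
proof (induction n arbitrary: x)
  case 0
  then show ?case using sd y unfolding specdec_def by simp
next
  case (Suc n)
  have ev: "\<forall>j<r. (\<Sum>z\<in>S. A x z * v j z) = lam j * v j x" using sd Suc.prems unfolding specdec_def eigfam_def by auto
  have "mat_pow S A (Suc n) x y = (\<Sum>z\<in>S. A x z * (\<Sum>j<r. lam j ^ n * v j z * v j y))"
    using Suc.IH by (simp add: mat_mult_def)
  also have "\<dots> = (\<Sum>j<r. lam j ^ n * v j y * (\<Sum>z\<in>S. A x z * v j z))"
    by (simp add: sum_distrib_left sum_distrib_right mult_ac) (rule sum.swap)
  also have "\<dots> = (\<Sum>j<r. lam j ^ Suc n * v j x * v j y)"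
    using ev by (intro sum.cong) (auto simp: mult_ac)
  finally show ?case .
qed

lemma exp_expand:
  assumes fin: "finite S" and sd: "specdec S A v lam r" and x: "x \<in> S" and y: "y \<in> S"
  shows "mat_exp S A x y = (\<Sum>j<r. exp (lam j) * v j x * v j y)"
proof -
  have "(\<lambda>n. mat_pow S A n x y / fact n) = (\<lambda>n. \<Sum>j<r. (lam j ^ n /\<^sub>R fact n) * (v j x * v j y))"
    using pow_expand[OF assms] by (intro ext) (simp add: sum_distrib_left divide_inverse mult_ac)
  moreover have "(\<lambda>n. \<Sum>j<r. (lam j ^ n /\<^sub>R fact n) * (v j x * v j y)) sums (\<Sum>j<r. exp (lam j) * (v j x * v j y))"
    by (intro sums_sum sums_mult2 exp_converges)
  ultimately show ?thesis unfolding mat_exp_def by (simp add: sums_iff mult_ac)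
qed

lemma A_expand:
  assumes fin: "finite S" and sd: "specdec S A v lam r" and x: "x \<in> S" and y: "y \<in> S"
  shows "A x y = (\<Sum>j<r. lam j * v j x * v j y)"
proof -
  have "(\<Sum>z\<in>S. A x z * (if z = y then 1 else 0)) = (\<Sum>z\<in>S. if z = y then A x z else 0)"
    by (intro sum.cong) auto
  also have "\<dots> = A x y" using fin y by simp
  finally show ?thesis using pow_expand[OF assms, of 1] by (simp add: mat_mult_def)
qed



definition adj :: "'a set set \<Rightarrow> ('a set \<Rightarrow> real) \<Rightarrow> 'a \<Rightarrow> 'a \<Rightarrow> real" where
  "adj E w x y = (if {x, y} \<in> E then w {x, y} else 0)"

lemma adj_sym: "adj E w x y = adj E w y x"
  unfolding adj_def by (simp add: insert_commute)

lemma wgraph_edge: "wgraph V E w \<Longrightarrow> {x, y} \<in> E \<Longrightarrow> x \<in> V \<and> y \<in> V \<and> x \<noteq> y"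
  unfolding wgraph_def by (metis doubleton_eq_iff)

lemma adj_refl: "wgraph V E w \<Longrightarrow> adj E w x x = 0"
  unfolding adj_def using wgraph_edge[of V E w x x] by auto

lemma lap_symm: "symm V (\<lambda>a b. - t * laplacian V E w a b)"
  unfolding symm_def laplacian_def by (simp add: insert_commute)

lemma lap_adj:
  assumes "wgraph V E w" "x \<in> V"
  shows "laplacian V E w x y = (if x = y then (\<Sum>z\<in>V. adj E w x z) else 0) - adj E w x y"
proof -
  have fin: "finite V" using assms unfolding wgraph_def by auto
  have "(\<Sum>z\<in>V. adj E w x z) = (\<Sum>z\<in>V - {x}. adj E w x z) + adj E w x x"
    using fin assms(2) by (simp add: sum.remove add.commute)
  then have "(\<Sum>z\<in>V. adj E w x z) = (\<Sum>z\<in>V - {x}. adj E w x z)" using adj_refl[OF assms(1)] by simp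
  then show ?thesis unfolding laplacian_def using adj_refl[OF assms(1), of x]
    by (auto simp: adj_def)
qed

lemma lapQ:
  assumes g: "wgraph V E w"
  shows "Qf V (laplacian V E w) f = (1/2) * (\<Sum>x\<in>V. \<Sum>y\<in>V. adj E w x y * (f x - f y)^2)"
proof -
  have fin: "finite V" using assms unfolding wgraph_def by auto
  have "Qf V (laplacian V E w) f = (\<Sum>x\<in>V. \<Sum>y\<in>V. ((if x = y then (\<Sum>z\<in>V. adj E w x z) else 0) - adj E w x y) * f x * f y)"
    unfolding Qf_def using lap_adj[OF g] by (intro sum.cong refl) auto
  also have "\<dots> = (\<Sum>x\<in>V. (\<Sum>z\<in>V. adj E w x z) * f x * f x) - (\<Sum>x\<in>V. \<Sum>y\<in>V. adj E w x y * f x * f y)"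
    using fin by (simp add: left_diff_distrib sum_subtractf if_distrib[of "\<lambda>a. a * _"] cong: if_cong)
  finally have 1: "Qf V (laplacian V E w) f = (\<Sum>x\<in>V. (\<Sum>z\<in>V. adj E w x z) * f x * f x) - (\<Sum>x\<in>V. \<Sum>y\<in>V. adj E w x y * f x * f y)" .
  have "(\<Sum>x\<in>V. \<Sum>y\<in>V. adj E w x y * (f x - f y)^2) =
        (\<Sum>x\<in>V. \<Sum>y\<in>V. adj E w x y * f x * f x) + (\<Sum>x\<in>V. \<Sum>y\<in>V. adj E w x y * f y * f y)
         - 2 * (\<Sum>x\<in>V. \<Sum>y\<in>V. adj E w x y * f x * f y)"
    by (simp add: power2_eq_square algebra_simps sum.distrib sum_subtractf sum_distrib_left)
  also have "(\<Sum>x\<in>V. \<Sum>y\<in>V. adj E w x y * f y * f y) = (\<Sum>x\<in>V. \<Sum>y\<in>V. adj E w x y * f x * f x)"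
    by (subst sum.swap) (simp add: adj_sym)
  also have "(\<Sum>x\<in>V. \<Sum>y\<in>V. adj E w x y * f x * f x) = (\<Sum>x\<in>V. (\<Sum>z\<in>V. adj E w x z) * f x * f x)"
    by (simp add: sum_distrib_right)
  finally show ?thesis using 1 by simp
qed

lemma adj_out:
  assumes "wgraph V E w" "x \<notin> V \<or> y \<notin> V"
  shows "adj E w x y = 0"
  using wgraph_edge[OF assms(1), of x y] assms(2) unfolding adj_def by auto

lemma lapQ_ext:
  assumes g: "wgraph V' E w" and sub: "V' \<subseteq> V" and fin: "finite V"
  shows "Qf V' (laplacian V' E w) f = (1/2) * (\<Sum>x\<in>V. \<Sum>y\<in>V. adj E w x y * (f x - f y)^2)"
proof -
  have "(\<Sum>x\<in>V'. \<Sum>y\<in>V'. adj E w x y * (f x - f y)^2) = (\<Sum>x\<in>V. \<Sum>y\<in>V'. adj E w x y * (f x - f y)^2)"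
    using fin sub adj_out[OF g] by (intro sum.mono_neutral_left) auto
  also have "\<dots> = (\<Sum>x\<in>V. \<Sum>y\<in>V. adj E w x y * (f x - f y)^2)"
    using fin sub adj_out[OF g] by (intro sum.cong refl sum.mono_neutral_left) auto
  finally show ?thesis using lapQ[OF g] by simp
qed


lemma quadexp:
  "(\<Sum>q<n. c q * (ip S f (W q))^2) = (\<Sum>x\<in>S. \<Sum>y\<in>S. (\<Sum>q<n. c q * W q x * W q y) * f x * f y)"
proof -
  have "(\<Sum>q<n. c q * (ip S f (W q))^2) = (\<Sum>q<n. \<Sum>x\<in>S. \<Sum>y\<in>S. c q * W q x * W q y * f x * f y)"
  proof (intro sum.cong refl)
    fix q
    have "(ip S f (W q))^2 = (\<Sum>x\<in>S. \<Sum>y\<in>S. (f x * W q x) * (f y * W q y))"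
      unfolding ip_def power2_eq_square by (rule sum_product)
    then show "c q * (ip S f (W q))^2 = (\<Sum>x\<in>S. \<Sum>y\<in>S. c q * W q x * W q y * f x * f y)"
      by (simp add: sum_distrib_left mult_ac)
  qed
  also have "\<dots> = (\<Sum>x\<in>S. \<Sum>q<n. \<Sum>y\<in>S. c q * W q x * W q y * f x * f y)"
    by (rule sum.swap)
  also have "\<dots> = (\<Sum>x\<in>S. \<Sum>y\<in>S. \<Sum>q<n. c q * W q x * W q y * f x * f y)"
    by (intro sum.cong refl sum.swap)
  also have "\<dots> = (\<Sum>x\<in>S. \<Sum>y\<in>S. (\<Sum>q<n. c q * W q x * W q y) * f x * f y)"
    by (simp add: sum_distrib_right)
  finally show ?thesis .
qed

lemma parseval:
  assumes fin: "finite S" and "specdec S A W mu n"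
  shows "(\<Sum>q<n. (ip S f (W q))^2) = ip S f f"
proof -
  have "(\<Sum>q<n. (ip S f (W q))^2) = (\<Sum>q<n. 1 * (ip S f (W q))^2)" by simp
  also have "\<dots> = (\<Sum>x\<in>S. \<Sum>y\<in>S. (if x = y then 1 else 0) * f x * f y)"
    unfolding quadexp using assms unfolding specdec_def by (intro sum.cong refl) auto
  also have "\<dots> = ip S f f" unfolding ip_def using fin
    by (intro sum.cong refl) (simp add: if_distrib[of "\<lambda>a. a * _"] sum.delta sum.delta' cong: if_cong)
  finally show ?thesis .
qed

lemma quadform:
  assumes "finite S" "specdec S A W mu n"
  shows "(\<Sum>q<n. mu q * (ip S f (W q))^2) = Qf S A f"
  unfolding quadexp Qf_def using A_expand[OF assms] by (intro sum.cong refl) auto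

lemma Qf_neg: "Qf S (\<lambda>a b. - t * L a b) f = - t * Qf S L f"
  unfolding Qf_def by (simp add: sum_distrib_left mult_ac)

lemma eig_Qf:
  assumes "eigfam S A v lam r" "j < r"
  shows "Qf S A (v j) = lam j"
proof -
  have ev: "\<forall>x\<in>S. (\<Sum>y\<in>S. A x y * v j y) = lam j * v j x" and n: "ip S (v j) (v j) = 1"
    using assms unfolding eigfam_def orthofam_def by auto
  have "Qf S A (v j) = (\<Sum>x\<in>S. v j x * (\<Sum>y\<in>S. A x y * v j y))"
    unfolding Qf_def by (simp add: sum_distrib_left mult_ac)
  also have "\<dots> = lam j * ip S (v j) (v j)" using ev unfolding ip_def
    by (simp add: sum_distrib_left mult_ac)
  finally show ?thesis using n by simp
qed

lemma hr_sum:
  assumes "finite S" "specdec S (\<lambda>a b. - t * laplacian S E w a b) v lam r"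
  shows "(\<Sum>x\<in>S. heat_return S E w t x) = (\<Sum>j<r. exp (lam j))"
proof -
  have "(\<Sum>x\<in>S. heat_return S E w t x) = (\<Sum>x\<in>S. \<Sum>j<r. exp (lam j) * v j x * v j x)"
    unfolding heat_return_def using exp_expand[OF assms] by (intro sum.cong refl) auto
  also have "\<dots> = (\<Sum>j<r. exp (lam j) * ip S (v j) (v j))"
    unfolding ip_def by (subst sum.swap) (simp add: sum_distrib_left mult_ac)
  also have "\<dots> = (\<Sum>j<r. exp (lam j))"
    using assms(2) unfolding specdec_def eigfam_def orthofam_def by simp
  finally show ?thesis .
qed

lemma double_count:
  fixes k m :: nat
  assumes fin: "finite V" and sub: "\<forall>i\<in>{1..k}. VH i \<subseteq> V"
    and ci: "\<forall>x\<in>V. card {i\<in>{1..k}. x \<in> VH i} = m"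
  shows "(\<Sum>i\<in>{1..k}. \<Sum>x\<in>VH i. g x) = real m * (\<Sum>x\<in>V. g x)"
proof -
  have "(\<Sum>i\<in>{1..k}. \<Sum>x\<in>VH i. g x) = (\<Sum>i\<in>{1..k}. \<Sum>x\<in>V. if x \<in> VH i then g x else 0)"
  proof (rule sum.cong[OF refl])
    fix i assume "i \<in> {1..k}"
    then have "V \<inter> VH i = VH i" using sub by auto
    then show "(\<Sum>x\<in>VH i. g x) = (\<Sum>x\<in>V. if x \<in> VH i then g x else 0)"
      using sum.inter_restrict[OF fin, of g "VH i"] by simp
  qed
  also have "\<dots> = (\<Sum>x\<in>V. \<Sum>i\<in>{1..k}. if x \<in> VH i then g x else 0)" by (rule sum.swap)
  also have "\<dots> = (\<Sum>x\<in>V. real m * g x)"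
  proof (intro sum.cong refl)
    fix x assume x: "x \<in> V"
    have "(\<Sum>i\<in>{1..k}. if x \<in> VH i then g x else 0) = (\<Sum>i\<in>{i\<in>{1..k}. x \<in> VH i}. g x)"
      by (rule sum.inter_filter[symmetric]) simp
    also have "\<dots> = real m * g x" using ci x by simp
    finally show "(\<Sum>i\<in>{1..k}. if x \<in> VH i then g x else 0) = real m * g x" .
  qed
  finally show ?thesis by (simp add: sum_distrib_left)
qed

lemma dsum_scale: "c * (\<Sum>x\<in>V. \<Sum>y\<in>V. T x y * q x y) = (\<Sum>x\<in>V. \<Sum>y\<in>V. (c * T x y) * q x y)"
  for c :: real by (simp add: sum_distrib_left mult.assoc)

lemma adj_compare:
  fixes k m :: nat
  assumes H: "\<forall>i\<in>{1..k}. EH i \<subseteq> E"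
    and cond_ii: "\<forall>e\<in>E. w e \<ge> (1 / real m) * (\<Sum>i\<in>{i\<in>{1..k}. e \<in> EH i}. wH i e)"
  shows "(1 / real m) * (\<Sum>i\<in>{1..k}. adj (EH i) (wH i) x y) \<le> adj E w x y"
proof (cases "{x, y} \<in> E")
  case True
  have "(\<Sum>i\<in>{1..k}. adj (EH i) (wH i) x y) = (\<Sum>i\<in>{i\<in>{1..k}. {x,y} \<in> EH i}. wH i {x,y})"
    unfolding adj_def by (rule sum.inter_filter[symmetric]) simp
  then show ?thesis using cond_ii True unfolding adj_def by auto
next
  case False
  then have "\<forall>i\<in>{1..k}. adj (EH i) (wH i) x y = 0" using H unfolding adj_def by auto
  then show ?thesis using False unfolding adj_def by simp
qed

lemma lap_compare:
  fixes k m :: nat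
  assumes G: "wgraph V E w"
    and H: "\<forall>i\<in>{1..k}. wgraph (VH i) (EH i) (wH i) \<and> VH i \<subseteq> V \<and> EH i \<subseteq> E"
    and cond_ii: "\<forall>e\<in>E. w e \<ge> (1 / real m) * (\<Sum>i\<in>{i\<in>{1..k}. e \<in> EH i}. wH i e)"
  shows "(1 / real m) * (\<Sum>i\<in>{1..k}. Qf (VH i) (laplacian (VH i) (EH i) (wH i)) f) \<le> Qf V (laplacian V E w) f"
proof -
  have fin: "finite V" using G unfolding wgraph_def by auto
  have "(1 / real m) * (\<Sum>i\<in>{1..k}. Qf (VH i) (laplacian (VH i) (EH i) (wH i)) f)
      = (1 / real m) * (\<Sum>i\<in>{1..k}. (1/2) * (\<Sum>x\<in>V. \<Sum>y\<in>V. adj (EH i) (wH i) x y * (f x - f y)^2))"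
    using H lapQ_ext[OF _ _ fin] by (intro arg_cong[where f="\<lambda>a. _ * a"] sum.cong refl) auto
  also have "\<dots> = (1/2) * (\<Sum>x\<in>V. \<Sum>y\<in>V. ((1 / real m) * (\<Sum>i\<in>{1..k}. adj (EH i) (wH i) x y)) * (f x - f y)^2)"
  proof -
    have sw: "(\<Sum>i\<in>{1..k}. \<Sum>x\<in>V. \<Sum>y\<in>V. adj (EH i) (wH i) x y * (f x - f y)^2)
        = (\<Sum>x\<in>V. \<Sum>y\<in>V. \<Sum>i\<in>{1..k}. adj (EH i) (wH i) x y * (f x - f y)^2)"
      by (subst sum.swap) (rule sum.cong[OF refl], rule sum.swap)
    have "(1 / real m) * (\<Sum>i\<in>{1..k}. (1/2) * (\<Sum>x\<in>V. \<Sum>y\<in>V. adj (EH i) (wH i) x y * (f x - f y)^2))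
        = (1/2) * ((1 / real m) * (\<Sum>i\<in>{1..k}. \<Sum>x\<in>V. \<Sum>y\<in>V. adj (EH i) (wH i) x y * (f x - f y)^2))"
      by (simp only: sum_distrib_left[symmetric]) simp
    also have "\<dots> = (1/2) * ((1 / real m) * (\<Sum>x\<in>V. \<Sum>y\<in>V. (\<Sum>i\<in>{1..k}. adj (EH i) (wH i) x y) * (f x - f y)^2))"
      unfolding sw by (simp add: sum_distrib_right)
    also have "\<dots> = (1/2) * (\<Sum>x\<in>V. \<Sum>y\<in>V. ((1 / real m) * (\<Sum>i\<in>{1..k}. adj (EH i) (wH i) x y)) * (f x - f y)^2)"
      by (subst dsum_scale) (rule refl)
    finally show ?thesis .
  qed
  also have "\<dots> \<le> (1/2) * (\<Sum>x\<in>V. \<Sum>y\<in>V. adj E w x y * (f x - f y)^2)"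
    using adj_compare[OF _ cond_ii] H
    by (intro mult_left_mono sum_mono mult_right_mono) auto
  also have "\<dots> = Qf V (laplacian V E w) f" using lapQ[OF G] by simp
  finally show ?thesis .
qed


theorem theorem4p2:
  fixes V :: "'a set" and E :: "'a set set" and w :: "'a set \<Rightarrow> real"
    and k m :: nat
    and VH :: "nat \<Rightarrow> 'a set" and EH :: "nat \<Rightarrow> 'a set set" and wH :: "nat \<Rightarrow> 'a set \<Rightarrow> real"
  assumes G: "wgraph V E w"
    and H: "\<forall>i\<in>{1..k}. wgraph (VH i) (EH i) (wH i) \<and> VH i \<subseteq> V \<and> EH i \<subseteq> E"
    and m_pos: "m > 0"
    and cond_i: "\<forall>x\<in>V. card {i\<in>{1..k}. x \<in> VH i} = m"
    and cond_ii: "\<forall>e\<in>E. w e \<ge> (1 / real m) * (\<Sum>i\<in>{i\<in>{1..k}. e \<in> EH i}. wH i e)"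
    and t_pos: "t > 0"
  shows "(1 / real (card V)) * (\<Sum>x\<in>V. heat_return V E w t x)
     \<le> (1 / real (\<Sum>j=1..k. card (VH j))) *
        (\<Sum>i=1..k. \<Sum>x\<in>VH i. heat_return (VH i) (EH i) (wH i) t x)"
proof -
  have finV: "finite V" using G unfolding wgraph_def by auto
  have finH: "\<forall>i\<in>{1..k}. finite (VH i)" using H unfolding wgraph_def by auto
  have subH: "\<forall>i\<in>{1..k}. VH i \<subseteq> V" using H by auto
  define Mg where "Mg = (\<lambda>a b. - t * laplacian V E w a b)"
  define Mi where "Mi = (\<lambda>i a b. - t * laplacian (VH i) (EH i) (wH i) a b)"
  obtain v \<beta> r where sdG: "specdec V Mg v \<beta> r"
    using spectral'[OF finV lap_symm[of V t E w]] unfolding Mg_def by blast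
  have "\<forall>i\<in>{1..k}. \<exists>T. specdec (VH i) (Mi i) (fst T) (fst (snd T)) (snd (snd T))"
  proof
    fix i assume i: "i \<in> {1..k}"
    obtain a b c where "specdec (VH i) (Mi i) a b c"
      using spectral'[OF finH[rule_format, OF i] lap_symm[of "VH i" t "EH i" "wH i"]] unfolding Mi_def by blast
    then show "\<exists>T. specdec (VH i) (Mi i) (fst T) (fst (snd T)) (snd (snd T))"
      by (intro exI[of _ "(a,b,c)"]) simp
  qed
  from bchoice[OF this] obtain T where sdH: "\<forall>i\<in>{1..k}. specdec (VH i) (Mi i) (fst (T i)) (fst (snd (T i))) (snd (snd (T i)))"
    by (elim exE) (rule that)
  define W where "W = (\<lambda>i. fst (T i))"
  define mu where "mu = (\<lambda>i. fst (snd (T i)))"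
  define rr where "rr = (\<lambda>i. snd (snd (T i)))"
  have sdH: "specdec (VH i) (Mi i) (W i) (mu i) (rr i)" if "i \<in> {1..k}" for i
    using sdH that unfolding W_def mu_def rr_def by blast
  define c where "c = (\<lambda>i j q. ip (VH i) (v j) (W i q))"
  have LHS: "(\<Sum>x\<in>V. heat_return V E w t x) = (\<Sum>j<r. exp (\<beta> j))"
    using hr_sum[OF finV sdG[unfolded Mg_def]] .
  have RHS: "(\<Sum>i=1..k. \<Sum>x\<in>VH i. heat_return (VH i) (EH i) (wH i) t x) = (\<Sum>i=1..k. \<Sum>q<rr i. exp (mu i q))"
  proof (rule sum.cong[OF refl])
    fix i assume i: "i \<in> {1..k}"
    show "(\<Sum>x\<in>VH i. heat_return (VH i) (EH i) (wH i) t x) = (\<Sum>q<rr i. exp (mu i q))"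
      using hr_sum[OF finH[rule_format, OF i] sdH[OF i, unfolded Mi_def]] .
  qed
  have key: "real m * exp (\<beta> j) \<le> (\<Sum>i=1..k. \<Sum>q<rr i. exp (mu i q) * (c i j q)^2)" if j: "j < r" for j
  proof -
    have efG: "eigfam V Mg v \<beta> r" using sdG unfolding specdec_def by auto
    define u where "u = v j"
    have u1: "ip V u u = 1" using efG j unfolding u_def eigfam_def orthofam_def by auto
    have b: "\<beta> j = - t * Qf V (laplacian V E w) u"
      using eig_Qf[OF efG j] unfolding Mg_def u_def Qf_neg by simp
    have qi: "(\<Sum>q<rr i. mu i q * (c i j q)^2) = - t * Qf (VH i) (laplacian (VH i) (EH i) (wH i)) u"
      if i: "i \<in> {1..k}" for i
      using quadform[OF finH[rule_format, OF i] sdH[OF i], of u] unfolding c_def u_def Mi_def Qf_neg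
      by simp
    have pi: "(\<Sum>q<rr i. (c i j q)^2) = ip (VH i) u u" if i: "i \<in> {1..k}" for i
      using parseval[OF finH[rule_format, OF i] sdH[OF i], of u] unfolding c_def u_def by simp
    have wsum: "(\<Sum>i=1..k. ip (VH i) u u) = real m"
      using double_count[OF finV subH cond_i, of "\<lambda>x. u x * u x"] u1 unfolding ip_def by simp
    have cmp: "(1 / real m) * (\<Sum>i\<in>{1..k}. Qf (VH i) (laplacian (VH i) (EH i) (wH i)) u) \<le> Qf V (laplacian V E w) u"
      by (rule lap_compare[OF G H cond_ii])
    define I where "I = (SIGMA i:{1..k}. {..<rr i})"
    have finI: "finite I" unfolding I_def by auto
    define a where "a = (\<lambda>(i,q). (c i j q)^2 / real m)"
    define y where "y = (\<lambda>(i,q). mu i q)"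
    have Ssum: "(\<Sum>p\<in>I. case_prod g p) = (\<Sum>i=1..k. \<Sum>q<rr i. g i q)" for g :: "nat \<Rightarrow> nat \<Rightarrow> real"
      unfolding I_def by (rule sum.Sigma[symmetric]) auto
    have mp: "real m > 0" using m_pos by simp
    have asum: "(\<Sum>p\<in>I. a p) = 1"
    proof -
      have "(\<Sum>p\<in>I. a p) = (\<Sum>i=1..k. \<Sum>q<rr i. (c i j q)^2 / real m)"
        unfolding a_def by (rule Ssum)
      also have "\<dots> = (\<Sum>i=1..k. ip (VH i) u u) / real m"
        using pi by (simp add: sum_divide_distrib[symmetric])
      finally show ?thesis using wsum mp by simp
    qed
    then have neI: "I \<noteq> {}" by auto
    have jen: "exp (\<Sum>p\<in>I. a p *\<^sub>R y p) \<le> (\<Sum>p\<in>I. a p * exp (y p))"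
      by (rule convex_on_sum[OF finI neI exp_convex asum]) (auto simp: a_def)
    have ay: "(\<Sum>p\<in>I. a p *\<^sub>R y p) = (1 / real m) * (\<Sum>i=1..k. - t * Qf (VH i) (laplacian (VH i) (EH i) (wH i)) u)"
    proof -
      have "(\<Sum>p\<in>I. a p *\<^sub>R y p) = (\<Sum>p\<in>I. (\<lambda>(i,q). (c i j q)^2 / real m * mu i q) p)"
        unfolding a_def y_def by (intro sum.cong refl) (auto simp: split_beta)
      also have "\<dots> = (\<Sum>i=1..k. \<Sum>q<rr i. (c i j q)^2 / real m * mu i q)"
        by (rule Ssum)
      also have "\<dots> = (1 / real m) * (\<Sum>i=1..k. \<Sum>q<rr i. mu i q * (c i j q)^2)"
        by (simp add: sum_distrib_left mult_ac)
      also have "\<dots> = (1 / real m) * (\<Sum>i=1..k. - t * Qf (VH i) (laplacian (VH i) (EH i) (wH i)) u)"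
        using qi by simp
      finally show ?thesis .
    qed
    have "\<beta> j \<le> (\<Sum>p\<in>I. a p *\<^sub>R y p)"
    proof -
      have "(\<Sum>p\<in>I. a p *\<^sub>R y p) = - t * ((1 / real m) * (\<Sum>i\<in>{1..k}. Qf (VH i) (laplacian (VH i) (EH i) (wH i)) u))"
        unfolding ay by (simp add: sum_distrib_left)
      also have "\<dots> \<ge> - t * Qf V (laplacian V E w) u"
        using cmp t_pos by (intro mult_left_mono_neg) auto
      finally show ?thesis using b by simp
    qed
    then have "exp (\<beta> j) \<le> (\<Sum>p\<in>I. a p * exp (y p))" using jen by (meson exp_le_cancel_iff order_trans)
    also have "(\<Sum>p\<in>I. a p * exp (y p)) = (\<Sum>p\<in>I. (\<lambda>(i,q). (c i j q)^2 / real m * exp (mu i q)) p)"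
      unfolding a_def y_def by (intro sum.cong refl) (auto simp: split_beta)
    also have "\<dots> = (\<Sum>i=1..k. \<Sum>q<rr i. (c i j q)^2 / real m * exp (mu i q))"
      by (rule Ssum)
    also have "\<dots> = (1 / real m) * (\<Sum>i=1..k. \<Sum>q<rr i. exp (mu i q) * (c i j q)^2)"
      by (simp add: sum_distrib_left mult_ac)
    finally show ?thesis using mp by (simp add: field_simps)
  qed
  have csum: "(\<Sum>j<r. (c i j q)^2) = 1" if i: "i \<in> {1..k}" and q: "q < rr i" for i q
  proof -
    have "specdec V Mg v \<beta> r" by (rule sdG)
    have "(\<Sum>j<r. (c i j q)^2) = (\<Sum>j<r. (ip (VH i) (W i q) (v j))^2)"
      unfolding c_def by (simp add: ip_comm)
    also have "\<dots> = (\<Sum>x\<in>VH i. \<Sum>y\<in>VH i. (\<Sum>j<r. 1 * v j x * v j y) * W i q x * W i q y)"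
      using quadexp[where c="\<lambda>_. 1" and n=r and S="VH i" and f="W i q" and W=v] by simp
    also have "\<dots> = (\<Sum>x\<in>VH i. \<Sum>y\<in>VH i. (if x = y then 1 else 0) * W i q x * W i q y)"
    proof -
      have VHsub: "VH i \<subseteq> V" using subH i by blast
      have cm: "\<forall>x\<in>V. \<forall>y\<in>V. (\<Sum>j<r. v j x * v j y) = (if x = y then 1 else 0)"
        using sdG unfolding specdec_def by blast
      show ?thesis
      proof (intro sum.cong refl)
        fix x y assume "x \<in> VH i" "y \<in> VH i"
        then have "x \<in> V" "y \<in> V" using VHsub by auto
        then show "(\<Sum>j<r. 1 * v j x * v j y) * W i q x * W i q y = (if x = y then 1 else 0) * W i q x * W i q y"
          using cm by simp
      qed
    qed
    also have "\<dots> = ip (VH i) (W i q) (W i q)" unfolding ip_def using finH i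
      by (intro sum.cong refl) (simp add: if_distrib[of "\<lambda>a. a * _"] sum.delta sum.delta' cong: if_cong)
    also have "\<dots> = 1" using sdH[OF i] q unfolding specdec_def eigfam_def orthofam_def by auto
    finally show ?thesis .
  qed
  have main: "real m * (\<Sum>j<r. exp (\<beta> j)) \<le> (\<Sum>i=1..k. \<Sum>q<rr i. exp (mu i q))"
  proof -
    have "real m * (\<Sum>j<r. exp (\<beta> j)) \<le> (\<Sum>j<r. \<Sum>i=1..k. \<Sum>q<rr i. exp (mu i q) * (c i j q)^2)"
      unfolding sum_distrib_left using key by (intro sum_mono) auto
    also have "\<dots> = (\<Sum>i=1..k. \<Sum>q<rr i. exp (mu i q) * (\<Sum>j<r. (c i j q)^2))"
      by (subst sum.swap) (simp add: sum_distrib_left sum.swap[of _ "{..<r}"])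
    also have "\<dots> = (\<Sum>i=1..k. \<Sum>q<rr i. exp (mu i q))"
      using csum by (intro sum.cong refl) auto
    finally show ?thesis .
  qed
  have D: "real (\<Sum>j=1..k. card (VH j)) = real m * real (card V)"
    using double_count[OF finV subH cond_i, of "\<lambda>_. 1"] by simp
  show ?thesis
  proof (cases "card V = 0")
    case True
    then show ?thesis using D by simp
  next
    case False
    then have cp: "real (card V) > 0" by simp
    have mp: "real m > 0" using m_pos by simp
    show ?thesis unfolding LHS RHS D using main cp mp
      by (simp add: field_simps)
  qed
qed

end
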